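(* Let $\alpha,\beta,\gamma\in\mathbb R$ with $\alpha\beta>0$, and let $g\in C^0([0,1))$ be non-negative. Let $w\in C^1([0,1))\cap C^2((0,1))$ be a solution of the inhomogeneous hypergeometric equation $$z(1-z)w''(z)+(\gamma-(\alpha+\beta+1)z)w'(z)-\alpha\beta\,w(z)=g(z),\qquad 0\le z<1,$$ with $w(0)\ge0$ and $w'(0)>0$. Then $w$ is strictly increasing on $[0,1)$. *)

theory Defs
  imports "HOL-Analysis.Analysis"
begin

end

theory Submission
  imports Defs
begin

theorem lemma4p5:
  fixes \<alpha> \<beta> \<gamma> :: real
    and w w' w'' g :: "real \<Rightarrow> real"
  assumes ab: "\<alpha> * \<beta> > 0"
    and g_cont: "continuous_on {0..<1} g"
    and g_nonneg: "\<And>z. z \<in> {0..<1} \<Longrightarrow> g z \<ge> 0"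
    and w_deriv: "\<And>z. z \<in> {0..<1} \<Longrightarrow> (w has_real_derivative w' z) (at z within {0..<1})"
    and w'_cont: "continuous_on {0..<1} w'"
    and w'_deriv: "\<And>z. z \<in> {0<..<1} \<Longrightarrow> (w' has_real_derivative w'' z) (at z)"
    and w''_cont: "continuous_on {0<..<1} w''"
    and ode_int: "\<And>z. z \<in> {0<..<1} \<Longrightarrow>
       z * (1 - z) * w'' z + (\<gamma> - (\<alpha> + \<beta> + 1) * z) * w' z - \<alpha> * \<beta> * w z = g z"
    and ode_0: "\<gamma> * w' 0 - \<alpha> * \<beta> * w 0 = g 0"
    and w0: "w 0 \<ge> 0"
    and w'0: "w' 0 > 0"
  shows "strict_mono_on {0..<1} w"
proof -
  have incr: "w a < w b" if ab: "0 \<le> a" "a < b" "b < 1" and pos: "\<And>x. a < x \<Longrightarrow> x < b \<Longrightarrow> w' x > 0" for a b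
  proof -
    have "\<And>x. a \<le> x \<Longrightarrow> x \<le> b \<Longrightarrow> (w has_derivative (\<lambda>h. w' x * h)) (at x within {a..b})"
    proof -
      fix x assume x: "a \<le> x" "x \<le> b"
      then have "x \<in> {0..<1}" using ab by auto
      from w_deriv[OF this] have "(w has_real_derivative w' x) (at x within {a..b})"
        by (rule DERIV_subset) (use ab in auto)
      then show "(w has_derivative (\<lambda>h. w' x * h)) (at x within {a..b})"
        by (simp add: has_field_derivative_def)
    qed
    from mvt_simple[of a b w "\<lambda>x h. w' x * h", OF ab(2) this] obtain x where x: "x \<in> {a<..<b}" "w b - w a = w' x * (b - a)"
      by auto
    have "w' x * (b - a) > 0" using pos[of x] x(1) ab by simp
    with x(2) show ?thesis by simp
  qed
  have posall: "\<forall>z\<in>{0..<1}. w' z > 0"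
  proof (rule ccontr)
    assume "\<not> ?thesis"
    then obtain z1 where z1: "z1 \<in> {0..<1}" "w' z1 \<le> 0" by force
    have z1pos: "z1 > 0" using z1 w'0 by (cases "z1 = 0") auto
    have c1: "continuous_on {0..z1} w'"
      using w'_cont by (rule continuous_on_subset) (use z1 in auto)
    define T where "T = {z \<in> {0..z1}. w' z = 0}"
    have Tcl: "closed T" unfolding T_def
      by (rule continuous_closed_preimage_constant[OF c1 closed_atLeastAtMost])
    obtain x where "0 \<le> x" "x \<le> z1" "w' x = 0"
      using IVT2'[of w' z1 0 0] c1 z1 z1pos w'0 by auto
    then have Tne: "T \<noteq> {}" unfolding T_def by auto
    have Tbd: "bdd_below T" unfolding T_def by (auto intro: bdd_belowI[of _ 0])
    define z0 where "z0 = Inf T"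
    have z0T: "z0 \<in> T" unfolding z0_def using closed_contains_Inf[OF Tne Tbd Tcl] .
    then have z0: "0 \<le> z0" "z0 \<le> z1" "w' z0 = 0" unfolding T_def by auto
    have z0pos: "z0 > 0" using z0 w'0 by (cases "z0 = 0") auto
    have below: "w' z > 0" if zz: "0 \<le> z" "z < z0" for z
    proof (rule ccontr)
      assume "\<not> w' z > 0"
      moreover have "continuous_on {0..z} w'"
        using w'_cont by (rule continuous_on_subset) (use that z0 z1 in auto)
      ultimately obtain y where y: "0 \<le> y" "y \<le> z" "w' y = 0"
        using IVT2'[of w' z 0 0] zz w'0 by force
      then have "y \<in> T" unfolding T_def using that z0 by auto
      then have "z0 \<le> y" unfolding z0_def by (rule cInf_lower[OF _ Tbd])
      with y that show False by auto
    qed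
    have "w 0 < w z0" by (rule incr) (use z0pos z0 z1 below in auto)
    with w0 have wz0: "w z0 > 0" by auto
    have z0in: "z0 \<in> {0<..<1}" using z0pos z0 z1 by auto
    have "z0 * (1 - z0) * w'' z0 = g z0 + \<alpha> * \<beta> * w z0"
      using ode_int[OF z0in] z0 by simp
    moreover have "g z0 \<ge> 0" using g_nonneg z0in by auto
    moreover have "\<alpha> * \<beta> * w z0 > 0" using ab wz0 by simp
    ultimately have "z0 * (1 - z0) * w'' z0 > 0" by linarith
    moreover have "z0 * (1 - z0) > 0" using z0in by simp
    ultimately have w''pos: "w'' z0 > 0" by (simp add: zero_less_mult_iff)
    obtain d where d: "d > 0" "\<And>h. h > 0 \<Longrightarrow> h < d \<Longrightarrow> w' (z0 - h) < w' z0"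
      using DERIV_pos_inc_left[OF w'_deriv[OF z0in] w''pos] by blast
    define h where "h = min (d/2) (z0/2)"
    have "w' (z0 - h) < 0" using d(2)[of h] d(1) z0pos z0 unfolding h_def by auto
    moreover have "w' (z0 - h) > 0" using below[of "z0 - h"] d(1) z0pos unfolding h_def by auto
    ultimately show False by simp
  qed
  show ?thesis
  proof (rule strict_mono_onI)
    fix r s :: real assume "r \<in> {0..<1}" "s \<in> {0..<1}" "r < s"
    then show "w r < w s" by (intro incr) (use posall in auto)
  qed
qed

end
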